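(* Let $(Z_n)_{n\ge0}$ be a linear fractional Galton–Watson process in i.i.d. random environment (as in the context) which is supercritical, i.e. $R_\infty<\infty=R^{(-1)}_\infty$ a.s. Then $$\frac{1}{1-q(\mathbf{e})}=R_\infty\in[1,\infty)\quad\text{a.s.},$$ in particular $q(\mathbf{e})<1$ a.s. Furthermore, $$\lim_{n\to\infty}\frac{1}{\Pi_n}\Big(\frac{1}{R_n}-\mathbf{P}(Z_n>0)\Big)=\frac{1}{R_\infty^2}\quad\text{a.s.}$$
   Context: Let $(A_n,B_n)_{n\ge1}$ be i.i.d. copies of $(A,B)$ with $\mathbb{P}(A>0,B>0,A+B\ge1)=1$; $\mathbf{e}=(A_n,B_n)_{n\ge1}$. For $a,b>0$, $a+b\ge1$, $LF(a,b)$ is the distribution on $\mathbb{N}_0$ whose generating function $f$ satisfies $1/(1-f(s))=a/(1-s)+b$, $s\in[0,1)$. $(Z_n)$, $Z_0=1$: given $\mathbf{e}$, each individual of generation $k-1$ independently has offspring law $LF(A_k,B_k)$. $\mathbf{P}=\mathbb{P}(\cdot\mid\mathbf{e})$, and $q(\mathbf{e})=\lim_{n\to\infty}\mathbb{P}(Z_n=0\mid A_1,B_1,\dots,A_n,B_n)$ is the quenched extinction probability. $\Pi_0=1$, $\Pi_n=\prod_{k=1}^nA_k$, $R_n=\sum_{k=1}^n\Pi_{k-1}B_k$, $R_\infty=\lim R_n$, $R^{(-1)}_\infty=\sum_{k\ge1}\Pi_k^{-1}B_k$. *)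

theory Defs
  imports "HOL-Probability.Probability"
begin

definition LF :: "real \<Rightarrow> real \<Rightarrow> nat pmf" where
  "LF a b = (THE p. \<forall>s::real. 0 \<le> s \<and> s < 1 \<longrightarrow>
              1 / (1 - (\<Sum>k. pmf p k * s ^ k)) = a / (1 - s) + b)"

fun sum_iid :: "nat pmf \<Rightarrow> nat \<Rightarrow> nat pmf" where
  "sum_iid p 0 = return_pmf 0"
| "sum_iid p (Suc n) = bind_pmf p (\<lambda>x. map_pmf (\<lambda>y. x + y) (sum_iid p n))"

text \<open>Quenched law of Z_n given the environment (a k, b k), k >= 1: Z_0 = 1 and each
  individual of generation k-1 independently has offspring law LF(a k, b k).\<close>
fun Zlaw :: "(nat \<Rightarrow> real) \<Rightarrow> (nat \<Rightarrow> real) \<Rightarrow> nat \<Rightarrow> nat pmf" where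
  "Zlaw a b 0 = return_pmf 1"
| "Zlaw a b (Suc n) = bind_pmf (Zlaw a b n) (sum_iid (LF (a (Suc n)) (b (Suc n))))"

definition qext :: "(nat \<Rightarrow> real) \<Rightarrow> (nat \<Rightarrow> real) \<Rightarrow> real" where
  "qext a b = lim (\<lambda>n. pmf (Zlaw a b n) 0)"

definition Pi_env :: "(nat \<Rightarrow> real) \<Rightarrow> nat \<Rightarrow> real" where
  "Pi_env a n = (\<Prod>k=1..n. a k)"

definition R_env :: "(nat \<Rightarrow> real) \<Rightarrow> (nat \<Rightarrow> real) \<Rightarrow> nat \<Rightarrow> real" where
  "R_env a b n = (\<Sum>k=1..n. Pi_env a (k - 1) * b k)"

text \<open>R_infinity = sum over k >= 1 of Pi_(k-1) B_k (reindexed from 0).\<close>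
definition R_inf :: "(nat \<Rightarrow> real) \<Rightarrow> (nat \<Rightarrow> real) \<Rightarrow> real" where
  "R_inf a b = (\<Sum>k. Pi_env a k * b (Suc k))"

end

theory Submission
  imports Defs
begin


definition gen :: "nat pmf \<Rightarrow> real \<Rightarrow> real" where
  "gen p s = (\<Sum>k. pmf p k * s ^ k)"

definition GE :: "nat pmf \<Rightarrow> real \<Rightarrow> ennreal" where
  "GE p s = (\<integral>\<^sup>+k. ennreal (s ^ k) \<partial>measure_pmf p)"

lemma GE_gen:
  assumes "0 \<le> s" "s \<le> 1"
  shows "summable (\<lambda>k. pmf p k * s ^ k)" and "GE p s = ennreal (gen p s)"
proof -
  have eq: "GE p s = (\<Sum>k. ennreal (pmf p k * s ^ k))"
    unfolding GE_def nn_integral_measure_pmf nn_integral_count_space_nat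
    using assms by (simp add: ennreal_mult)
  have "GE p s \<le> (\<integral>\<^sup>+k. 1 \<partial>measure_pmf p)"
    unfolding GE_def using assms by (intro nn_integral_mono) (simp add: power_le_one)
  also have "\<dots> = 1" by simp
  finally have le: "GE p s \<le> 1" .
  show sm: "summable (\<lambda>k. pmf p k * s ^ k)"
    by (rule summable_suminf_not_top) (use assms le eq in \<open>auto simp: top_unique\<close>)
  show "GE p s = ennreal (gen p s)"
    unfolding eq gen_def using assms sm by (intro suminf_ennreal2) auto
qed

lemma gen_bounds:
  assumes "0 \<le> s" "s \<le> 1"
  shows "0 \<le> gen p s" "gen p s \<le> 1"
proof -
  show "0 \<le> gen p s" unfolding gen_def using GE_gen(1)[OF assms]
    using assms by (intro suminf_nonneg) auto
  have "GE p s \<le> (\<integral>\<^sup>+k. 1 \<partial>measure_pmf p)"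
    unfolding GE_def using assms by (intro nn_integral_mono) (simp add: power_le_one)
  also have "\<dots> = 1" by simp
  finally show "gen p s \<le> 1" using GE_gen(2)[OF assms] \<open>0 \<le> gen p s\<close>
    by simp
qed


lemma GE_sum_iid:
  assumes "0 \<le> s"
  shows "GE (sum_iid q m) s = GE q s ^ m"
proof (induction m)
  case 0
  then show ?case by (simp add: GE_def)
next
  case (Suc m)
  have "GE (sum_iid q (Suc m)) s
      = (\<integral>\<^sup>+x. (\<integral>\<^sup>+y. ennreal (s ^ x) * ennreal (s ^ y) \<partial>measure_pmf (sum_iid q m)) \<partial>measure_pmf q)"
    unfolding GE_def using assms by (simp add: power_add ennreal_mult)
  also have "\<dots> = (\<integral>\<^sup>+x. ennreal (s ^ x) * GE (sum_iid q m) s \<partial>measure_pmf q)"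
    unfolding GE_def by (subst nn_integral_cmult) auto
  also have "\<dots> = GE q s * GE (sum_iid q m) s"
    unfolding GE_def by (subst nn_integral_multc) auto
  finally show ?case using Suc by simp
qed

lemma gen_zero: "gen p 0 = pmf p 0"
  unfolding gen_def by simp

lemma gen_Zlaw_Suc:
  assumes "0 \<le> s" "s \<le> 1"
  shows "gen (Zlaw a b (Suc n)) s = gen (Zlaw a b n) (gen (LF (a (Suc n)) (b (Suc n))) s)"
proof -
  let ?L = "LF (a (Suc n)) (b (Suc n))"
  have t: "0 \<le> gen ?L s" "gen ?L s \<le> 1" using gen_bounds[OF assms] by auto
  have "GE (Zlaw a b (Suc n)) s = (\<integral>\<^sup>+m. GE (sum_iid ?L m) s \<partial>measure_pmf (Zlaw a b n))"
    by (simp add: GE_def)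
  also have "\<dots> = (\<integral>\<^sup>+m. ennreal (gen ?L s ^ m) \<partial>measure_pmf (Zlaw a b n))"
    using GE_sum_iid[OF assms(1)] GE_gen(2)[OF assms] t by (simp add: ennreal_power)
  also have "\<dots> = GE (Zlaw a b n) (gen ?L s)" by (simp add: GE_def)
  finally show ?thesis using GE_gen(2)[OF assms] GE_gen(2)[OF t] gen_bounds[OF assms] gen_bounds[OF t]
    by simp
qed


lemma powser_zero_unique0:
  fixes d :: "nat \<Rightarrow> real"
  assumes bd: "\<And>k. \<bar>d k\<bar> \<le> 1"
    and z: "\<And>s. 0 < s \<Longrightarrow> s < 1 \<Longrightarrow> (\<Sum>k. d k * s ^ k) = 0"
  shows "d 0 = 0"
proof -
  have "norm (d k * (1/2) ^ k) \<le> (1/2::real) ^ k" for k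
    using bd[of k] by (simp add: abs_mult mult_left_le_one_le)
  hence sm: "summable (\<lambda>k. d k * (1/2) ^ k)"
    by (intro summable_comparison_test'[OF summable_geometric[of "1/2::real"]]) auto
  define f where "f = (\<lambda>x::real. \<Sum>k. d k * x ^ k)"
  have "isCont f 0" unfolding f_def
    by (rule isCont_powser[OF sm]) simp
  hence "(f \<longlongrightarrow> f 0) (at 0)" by (simp add: isCont_def)
  hence "(f \<longlongrightarrow> f 0) (at_right 0)" using filterlim_at_split by blast
  moreover have "f 0 = d 0" unfolding f_def by simp
  ultimately have l1: "(f \<longlongrightarrow> d 0) (at_right 0)" by simp
  have "eventually (\<lambda>x. f x = 0) (at_right (0::real))"
    unfolding eventually_at_right[OF zero_less_one] f_def by (intro exI[of _ 1]) (auto intro: z)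
  hence l2: "(f \<longlongrightarrow> 0) (at_right 0)" by (rule tendsto_eventually)
  show ?thesis using tendsto_unique[OF trivial_limit_at_right_real l1 l2] .
qed

lemma powser_zero_unique:
  fixes d :: "nat \<Rightarrow> real"
  assumes bd: "\<And>k. \<bar>d k\<bar> \<le> 1"
    and z: "\<And>s. 0 < s \<Longrightarrow> s < 1 \<Longrightarrow> (\<Sum>k. d k * s ^ k) = 0"
  shows "d n = 0"
  using assms
proof (induction n arbitrary: d)
  case 0
  then show ?case using powser_zero_unique0 by blast
next
  case (Suc n)
  have d0: "d 0 = 0" using powser_zero_unique0 Suc.prems by blast
  have "(\<Sum>k. d (Suc k) * s ^ k) = 0" if "0 < s" "s < 1" for s
  proof -
    have "norm (d k * s ^ k) \<le> s ^ k" for k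
      using Suc.prems(1)[of k] that by (simp add: abs_mult mult_left_le_one_le)
    hence sm: "summable (\<lambda>k. d k * s ^ k)"
      by (intro summable_comparison_test'[OF summable_geometric[of s]]) (use that in auto)
    have "(\<Sum>k. d (Suc k) * s ^ k) * s = 0"
      using powser_split_head(2)[OF sm] Suc.prems(2)[OF that] d0 by simp
    thus ?thesis using that by simp
  qed
  then show ?case using Suc.IH[of "\<lambda>k. d (Suc k)"] Suc.prems(1) by blast
qed

lemma gen_unique:
  assumes "\<And>s. 0 \<le> s \<Longrightarrow> s < 1 \<Longrightarrow> gen p s = gen q s"
  shows "p = q"
proof (rule pmf_eqI)
  fix n
  let ?d = "\<lambda>k. pmf p k - pmf q k"
  have "?d n = 0"
  proof (rule powser_zero_unique)
    show "\<bar>?d k\<bar> \<le> 1" for k using pmf_le_1[of p k] pmf_le_1[of q k] pmf_nonneg[of p k] pmf_nonneg[of q k]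
      by linarith
    fix s :: real assume s: "0 < s" "s < 1"
    have "(\<Sum>k. ?d k * s ^ k) = (\<Sum>k. pmf p k * s ^ k - pmf q k * s ^ k)"
      by (simp add: algebra_simps)
    also have "\<dots> = gen p s - gen q s"
      unfolding gen_def using s GE_gen(1)[of s p] GE_gen(1)[of s q] by (intro suminf_diff[symmetric]) auto
    finally show "(\<Sum>k. ?d k * s ^ k) = 0" using assms s by simp
  qed
  thus "pmf p n = pmf q n" by simp
qed



lemma t1: fixes a b c s :: real assumes c: "c > 0"
  shows "a * b ^ n / c ^ (Suc n + 1) * s ^ Suc n = (a * s / c ^ 2) * (b * s / c) ^ n"
proof -
  have "c ^ (Suc n + 1) = c ^ 2 * c ^ n" by (simp add: power_add power2_eq_square)
  hence "a * b ^ n / c ^ (Suc n + 1) * s ^ Suc n = (a * s * (b ^ n * s ^ n)) / (c ^ 2 * c ^ n)"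
    by (simp add: algebra_simps)
  also have "\<dots> = (a * s / c ^ 2) * ((b ^ n * s ^ n) / c ^ n)"
    by simp
  also have "\<dots> = (a * s / c ^ 2) * (b * s / c) ^ n"
    by (simp add: power_divide power_mult_distrib)
  finally show ?thesis .
qed
lemma t2: fixes a b s :: real assumes c: "a + b > 0" and cbs: "a + b - b * s > 0"
  shows "(a * s / (a + b) ^ 2) * (1 / (1 - b * s / (a + b))) + (a + b - 1) / (a + b) = 1 - (1 - s) / (a + b - b * s)"
proof -
  define c where "c = a + b"
  have c0: "c \<noteq> 0" and d0: "c - b * s \<noteq> 0" using c cbs by (auto simp: c_def)
  have "1 - b * s / c = (c - b * s) / c" using c0 by (simp add: diff_divide_distrib)
  hence "(a * s / c ^ 2) * (1 / (1 - b * s / c)) = a * s / (c * (c - b * s))"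
    using c0 by (simp add: power2_eq_square)
  hence "(a * s / c ^ 2) * (1 / (1 - b * s / c)) + (c - 1) / c = (a * s + (c - 1) * (c - b * s)) / (c * (c - b * s))"
    using c0 d0 by (simp add: add_divide_distrib)
  also have "\<dots> = (c * (c - b * s) - c * (1 - s)) / (c * (c - b * s))"
    by (simp add: c_def algebra_simps)
  also have "\<dots> = 1 - (1 - s) / (c - b * s)"
    using c0 d0 by (simp add: diff_divide_distrib)
  finally show ?thesis by (simp add: c_def)
qed

lemma LF_series:
  fixes a b s :: real
  assumes a: "a > 0" and b: "b > 0" and ab: "a + b \<ge> 1" and s: "0 \<le> s" "s \<le> 1"
  defines "f \<equiv> (\<lambda>k::nat. if k = 0 then (a + b - 1) / (a + b) else a * b ^ (k - 1) / (a + b) ^ (k + 1))"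
  shows "(\<lambda>k. f k * s ^ k) sums (1 - (1 - s) / (a + b - b * s))"
proof -
  define c where "c = a + b"
  have c: "c > 0" "c \<ge> 1" using a b ab by (auto simp: c_def)
  have bs: "b * s \<le> b" using b s by (simp add: mult_left_le)
  have cbs: "c - b * s > 0" using a bs by (simp add: c_def)
  have bsc: "b * s < c" using bs a by (simp add: c_def)
  have r1: "0 \<le> b * s / c" using b s c by simp
  have r2: "b * s / c < 1" using bsc c by (simp add: field_simps)
  have r: "norm (b * s / c) < 1" using r1 r2 by simp
  have eq: "(\<lambda>n. f (Suc n) * s ^ Suc n) = (\<lambda>n. (a * s / c ^ 2) * (b * s / c) ^ n)"
  proof (rule ext)
    fix n
    have "f (Suc n) = a * b ^ n / c ^ (Suc n + 1)" by (simp add: f_def c_def)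
    thus "f (Suc n) * s ^ Suc n = (a * s / c ^ 2) * (b * s / c) ^ n"
      using t1[OF c(1), of a b n s] by simp
  qed
  have "(\<lambda>n. f (Suc n) * s ^ Suc n) sums ((a * s / c ^ 2) * (1 / (1 - b * s / c)))"
    unfolding eq by (intro sums_mult geometric_sums r)
  hence "(\<lambda>n. f n * s ^ n) sums ((a * s / c ^ 2) * (1 / (1 - b * s / c)) + f 0 * s ^ 0)"
    by (subst (asm) sums_Suc_iff) simp
  moreover have "(a * s / c ^ 2) * (1 / (1 - b * s / c)) + f 0 * s ^ 0 = 1 - (1 - s) / (a + b - b * s)"
    using t2[of a b s] c cbs unfolding f_def c_def by simp
  ultimately show ?thesis by simp
qed

lemma LF_gen:
  fixes a b s :: real
  assumes a: "a > 0" and b: "b > 0" and ab: "a + b \<ge> 1" and s: "0 \<le> s" "s < 1"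
  shows "gen (LF a b) s = 1 - 1 / (a / (1 - s) + b)"
proof -
  define f where "f \<equiv> (\<lambda>k::nat. if k = 0 then (a + b - 1) / (a + b) else a * b ^ (k - 1) / (a + b) ^ (k + 1))"
  let ?P = "\<lambda>p. \<forall>s::real. 0 \<le> s \<and> s < 1 \<longrightarrow>
              1 / (1 - (\<Sum>k. pmf p k * s ^ k)) = a / (1 - s) + b"
  have Xpos: "a / (1 - t) + b > 0" if "t < 1" for t using a b that by (auto intro: add_pos_pos)
  have fnn: "0 \<le> f k" for k using a b ab by (auto simp: f_def)
  have sm1: "f sums 1" using LF_series[OF a b ab, of 1] unfolding f_def by simp
  have "(\<integral>\<^sup>+x. ennreal (f x) \<partial>count_space UNIV) = 1"
    unfolding nn_integral_count_space_nat
    using suminf_ennreal2[OF fnn sums_summable[OF sm1]] sums_unique[OF sm1] by simp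
  hence pe: "pmf (embed_pmf f) k = f k" for k using fnn by (intro pmf_embed_pmf) auto
  have ex: "?P (embed_pmf f)"
  proof (intro allI impI)
    fix t :: real assume t: "0 \<le> t \<and> t < 1"
    have "(\<lambda>k. f k * t ^ k) sums (1 - (1 - t) / (a + b - b * t))"
      using LF_series[OF a b ab, of t] t unfolding f_def by simp
    hence "(\<Sum>k. pmf (embed_pmf f) k * t ^ k) = 1 - (1 - t) / (a + b - b * t)"
      by (simp add: pe sums_iff)
    hence "1 / (1 - (\<Sum>k. pmf (embed_pmf f) k * t ^ k)) = (a + b - b * t) / (1 - t)"
      by simp
    also have "\<dots> = a / (1 - t) + b"
    proof -
      have "1 - t \<noteq> 0" using t by simp
      thus ?thesis by (simp add: field_simps)
    qed
    finally show "1 / (1 - (\<Sum>k. pmf (embed_pmf f) k * t ^ k)) = a / (1 - t) + b" .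
  qed
  have gP: "gen p t = 1 - 1 / (a / (1 - t) + b)" if "?P p" "0 \<le> t" "t < 1" for p t
  proof -
    have h: "1 / (1 - gen p t) = a / (1 - t) + b" using that unfolding gen_def by blast
    have "1 - gen p t = 1 / (1 / (1 - gen p t))" by simp
    hence "1 - gen p t = 1 / (a / (1 - t) + b)" using h by metis
    thus ?thesis by simp
  qed
  have "\<exists>!p. ?P p"
  proof (rule ex1I[of _ "embed_pmf f"])
    show "?P (embed_pmf f)" by (rule ex)
    fix p assume P: "?P p"
    show "p = embed_pmf f"
    proof (rule gen_unique)
      fix t :: real assume "0 \<le> t" "t < 1"
      thus "gen p t = gen (embed_pmf f) t" using gP[OF P] gP[OF ex] by simp
    qed
  qed
  hence "?P (LF a b)" unfolding LF_def by (rule theI')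
  thus ?thesis using gP s by blast
qed



lemma Pi_0: "Pi_env a 0 = 1" by (simp add: Pi_env_def)
lemma Pi_Suc: "Pi_env a (Suc n) = Pi_env a n * a (Suc n)" by (simp add: Pi_env_def)
lemma R_0: "R_env a b 0 = 0" by (simp add: R_env_def)
lemma R_Suc: "R_env a b (Suc n) = R_env a b n + Pi_env a n * b (Suc n)" by (simp add: R_env_def)
lemma R_lessThan: "R_env a b n = (\<Sum>k<n. Pi_env a k * b (Suc k))"
  by (induction n) (simp_all add: R_0 R_Suc)

lemma gen_return:
  assumes "0 \<le> s" "s \<le> 1"
  shows "gen (return_pmf m) s = s ^ m"
proof -
  have "GE (return_pmf m) s = ennreal (s ^ m)" by (simp add: GE_def)
  thus ?thesis using GE_gen(2)[OF assms, of "return_pmf m"] gen_bounds[OF assms, of "return_pmf m"] assms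
    by simp
qed

lemma gen_Zlaw:
  fixes a b :: "nat \<Rightarrow> real"
  assumes pos: "\<And>k. k \<ge> 1 \<Longrightarrow> a k > 0 \<and> b k > 0 \<and> a k + b k \<ge> 1"
  shows "0 \<le> s \<Longrightarrow> s < 1 \<Longrightarrow> gen (Zlaw a b n) s = 1 - 1 / (Pi_env a n / (1 - s) + R_env a b n)"
proof (induction n arbitrary: s)
  case 0
  then show ?case by (simp add: gen_return Pi_0 R_0)
next
  case (Suc n)
  let ?a = "a (Suc n)" and ?b = "b (Suc n)"
  have ab: "?a > 0" "?b > 0" "?a + ?b \<ge> 1" using pos[of "Suc n"] by auto
  define X where "X = ?a / (1 - s) + ?b"
  have Xpos: "X > 0" unfolding X_def using ab Suc.prems by (auto intro: add_pos_pos)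
  define t where "t = gen (LF ?a ?b) s"
  have t: "t = 1 - 1 / X" unfolding t_def X_def using LF_gen[OF ab Suc.prems] .
  have t0: "0 \<le> t" unfolding t_def using gen_bounds Suc.prems by simp
  have t1: "t < 1" using t Xpos by simp
  have "gen (Zlaw a b (Suc n)) s = gen (Zlaw a b n) t"
    unfolding t_def using gen_Zlaw_Suc Suc.prems by simp
  also have "\<dots> = 1 - 1 / (Pi_env a n / (1 - t) + R_env a b n)" using Suc.IH t0 t1 by simp
  also have "Pi_env a n / (1 - t) = Pi_env a n * X" using t Xpos by simp
  also have "Pi_env a n * X + R_env a b n = Pi_env a (Suc n) / (1 - s) + R_env a b (Suc n)"
    unfolding X_def Pi_Suc R_Suc by (simp add: algebra_simps)
  finally show ?case .
qed



lemma det: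
  fixes a b :: "nat \<Rightarrow> real"
  assumes pos: "\<And>k. k \<ge> 1 \<Longrightarrow> a k > 0 \<and> b k > 0 \<and> a k + b k \<ge> 1"
    and s1: "summable (\<lambda>k. Pi_env a k * b (Suc k))"
    and s2: "\<not> summable (\<lambda>k. b (Suc k) / Pi_env a (Suc k))"
  shows "convergent (\<lambda>n. pmf (Zlaw a b n) 0)
         \<and> 1 / (1 - qext a b) = R_inf a b
         \<and> 1 \<le> R_inf a b
         \<and> qext a b < 1
         \<and> (\<lambda>n. (1 / R_env a b n - (1 - pmf (Zlaw a b n) 0)) / Pi_env a n)
             \<longlonglongrightarrow> 1 / (R_inf a b)\<^sup>2"
proof -
  define P where "P = Pi_env a"
  define R where "R = R_env a b"
  define Ri where "Ri = R_inf a b"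
  define M where "M = (\<lambda>n. P n + R n)"
  have Ppos: "P n > 0" for n
    by (induction n) (use pos in \<open>auto simp: P_def Pi_0 Pi_Suc\<close>)
  have tpos: "0 < P k * b (Suc k)" for k using Ppos[of k] pos[of "Suc k"] by simp
  have pz: "pmf (Zlaw a b n) 0 = 1 - 1 / M n" for n
    using gen_Zlaw[OF pos, where s=0 and n=n] gen_zero[of "Zlaw a b n"] by (simp add: M_def P_def R_def)
  have Msuc: "M n \<le> M (Suc n)" for n
  proof -
    have "M (Suc n) - M n = P n * (a (Suc n) + b (Suc n) - 1)"
      by (simp add: M_def P_def R_def Pi_Suc R_Suc algebra_simps)
    also have "\<dots> \<ge> 0" using Ppos[of n] pos[of "Suc n"] by simp
    finally show ?thesis by simp
  qed
  have incM: "incseq M" using Msuc by (simp add: incseq_SucI)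
  have M0: "M 0 = 1" by (simp add: M_def P_def R_def Pi_0 R_0)
  have M1: "M n \<ge> 1" for n using incseqD[OF incM, of 0 n] M0 by simp
  have Rlim: "R \<longlonglongrightarrow> Ri"
    unfolding R_def Ri_def R_inf_def R_lessThan[abs_def] using summable_LIMSEQ[OF s1] .
  have Rle: "R n \<le> Ri" for n
    unfolding R_def Ri_def R_inf_def R_lessThan
    by (rule sum_le_suminf[OF s1]) (use tpos in \<open>auto simp: P_def less_imp_le\<close>)
  have Rnn: "R n \<ge> 0" for n unfolding R_def R_lessThan using tpos unfolding P_def by (intro sum_nonneg) (simp add: less_imp_le)
  have Rpos: "R n > 0" if "n \<ge> 1" for n
  proof -
    obtain m where "n = Suc m" using \<open>n \<ge> 1\<close> by (cases n) auto
    thus ?thesis using Rnn[of m] tpos[of m] by (simp add: R_def R_Suc P_def)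
  qed
  have Plim: "P \<longlonglongrightarrow> 0"
  proof (rule ccontr)
    assume np: "\<not> P \<longlonglongrightarrow> 0"
    have "\<exists>c>0. \<exists>N. \<forall>n\<ge>N. c \<le> P n"
    proof (cases "\<exists>K. \<forall>n. M n \<le> K")
      case True
      then obtain K where "\<forall>n. M n \<le> K" by blast
      then obtain L where L: "M \<longlonglongrightarrow> L" using incseq_convergent[OF incM] by blast
      have "(\<lambda>n. M n - R n) \<longlonglongrightarrow> L - Ri" using L Rlim by (intro tendsto_diff)
      hence PL: "P \<longlonglongrightarrow> L - Ri" by (simp add: M_def)
      have "0 \<le> L - Ri" using LIMSEQ_le_const[OF PL, of 0] Ppos less_imp_le by blast
      moreover have "L - Ri \<noteq> 0" using PL np by auto
      ultimately have Lp: "L - Ri > 0" by simp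
      have "eventually (\<lambda>n. (L - Ri) / 2 < P n) sequentially"
      proof (rule order_tendstoD(1)[OF PL]) qed (use Lp in simp)
      then obtain N where "\<forall>n\<ge>N. (L - Ri) / 2 < P n" unfolding eventually_sequentially by blast
      thus ?thesis using Lp by (intro exI[of _ "(L - Ri) / 2"]) (auto intro: less_imp_le)
    next
      case False
      then obtain n0 where n0: "M n0 > 1 + Ri" by (meson not_le)
      have "1 \<le> P n" if "n \<ge> n0" for n
      proof -
        have "M n0 \<le> M n" using incseqD[OF incM that] .
        thus ?thesis using n0 Rle[of n] by (simp add: M_def)
      qed
      thus ?thesis by (intro exI[of _ 1]) auto
    qed
    then obtain c N where c: "c > 0" and cN: "\<And>n. n \<ge> N \<Longrightarrow> c \<le> P n" by blast
    have "summable (\<lambda>k. b (Suc k) / Pi_env a (Suc k))"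
    proof (rule summable_comparison_test'[where N=N])
      show "summable (\<lambda>k. Pi_env a k * b (Suc k) / c ^ 2)" using s1 by (rule summable_divide)
      fix k assume k: "k \<ge> N"
      have bk: "b (Suc k) > 0" using pos[of "Suc k"] by simp
      have "norm (b (Suc k) / Pi_env a (Suc k)) = b (Suc k) / P (Suc k)"
        using bk Ppos[of "Suc k"] by (simp add: P_def)
      also have "\<dots> \<le> b (Suc k) / c"
        using cN[of "Suc k"] k bk c by (intro divide_left_mono) auto
      also have "\<dots> = c * b (Suc k) / c ^ 2" using c by (simp add: power2_eq_square)
      also have "\<dots> \<le> P k * b (Suc k) / c ^ 2"
        using cN[OF k] bk c by (intro divide_right_mono mult_right_mono) auto
      finally show "norm (b (Suc k) / Pi_env a (Suc k)) \<le> Pi_env a k * b (Suc k) / c ^ 2"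
        by (simp add: P_def)
    qed
    thus False using s2 by blast
  qed
  have Mlim: "M \<longlonglongrightarrow> Ri" using tendsto_add[OF Plim Rlim] by (simp add: M_def)
  have Ri1: "1 \<le> Ri" using LIMSEQ_le_const[OF Mlim, of 1] M1 by blast
  have glim: "(\<lambda>n. pmf (Zlaw a b n) 0) \<longlonglongrightarrow> 1 - 1 / Ri"
    unfolding pz using Ri1 by (intro tendsto_intros Mlim) auto
  have q: "qext a b = 1 - 1 / Ri" unfolding qext_def using glim by (rule limI)
  have lastlim: "(\<lambda>n. 1 / (R n * M n)) \<longlonglongrightarrow> 1 / (Ri * Ri)"
    using Ri1 by (intro tendsto_intros Rlim Mlim) auto
  have ev: "eventually (\<lambda>n. 1 / (R n * M n) =
      (1 / R_env a b n - (1 - pmf (Zlaw a b n) 0)) / Pi_env a n) sequentially"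
    unfolding eventually_sequentially
  proof (intro exI[of _ 1] allI impI)
    fix n :: nat assume n: "n \<ge> 1"
    have r: "R n > 0" using Rpos[OF n] .
    have p: "P n > 0" using Ppos[of n] .
    have m: "M n > 0" using M1[of n] by simp
    have "(1 / R_env a b n - (1 - pmf (Zlaw a b n) 0)) / Pi_env a n = (1 / R n - 1 / M n) / P n"
      by (simp add: pz R_def P_def)
    also have "1 / R n - 1 / M n = P n / (R n * M n)"
      using r m by (simp add: M_def field_simps)
    also have "(P n / (R n * M n)) / P n = 1 / (R n * M n)" using p by simp
    finally show "1 / (R n * M n) = (1 / R_env a b n - (1 - pmf (Zlaw a b n) 0)) / Pi_env a n" by simp
  qed
  have "(\<lambda>n. (1 / R_env a b n - (1 - pmf (Zlaw a b n) 0)) / Pi_env a n) \<longlonglongrightarrow> 1 / (Ri * Ri)"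
    using tendsto_cong[OF ev] lastlim by blast
  moreover have "convergent (\<lambda>n. pmf (Zlaw a b n) 0)" using glim by (rule convergentI)
  ultimately show ?thesis using Ri1 q by (simp add: Ri_def power2_eq_square)
qed


theorem theorem4p1:
  fixes M :: "'w measure" and A B :: "nat \<Rightarrow> 'w \<Rightarrow> real"
  assumes "prob_space M"
    and indep: "prob_space.indep_vars M (\<lambda>_. borel :: (real \<times> real) measure)
                  (\<lambda>k \<omega>. (A k \<omega>, B k \<omega>)) {1..}"
    and ident: "\<forall>k\<ge>1. distr M (borel :: (real \<times> real) measure) (\<lambda>\<omega>. (A k \<omega>, B k \<omega>))
                     = distr M borel (\<lambda>\<omega>. (A 1 \<omega>, B 1 \<omega>))"
    and supp: "\<forall>k\<ge>1. AE \<omega> in M. A k \<omega> > 0 \<and> B k \<omega> > 0 \<and> A k \<omega> + B k \<omega> \<ge> 1"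
    and supercrit: "AE \<omega> in M. summable (\<lambda>k. Pi_env (\<lambda>j. A j \<omega>) k * B (Suc k) \<omega>)
                      \<and> \<not> summable (\<lambda>k. B (Suc k) \<omega> / Pi_env (\<lambda>j. A j \<omega>) (Suc k))"
  shows "AE \<omega> in M.
           convergent (\<lambda>n. pmf (Zlaw (\<lambda>j. A j \<omega>) (\<lambda>j. B j \<omega>) n) 0)
         \<and> 1 / (1 - qext (\<lambda>j. A j \<omega>) (\<lambda>j. B j \<omega>)) = R_inf (\<lambda>j. A j \<omega>) (\<lambda>j. B j \<omega>)
         \<and> 1 \<le> R_inf (\<lambda>j. A j \<omega>) (\<lambda>j. B j \<omega>)
         \<and> qext (\<lambda>j. A j \<omega>) (\<lambda>j. B j \<omega>) < 1
         \<and> (\<lambda>n. (1 / R_env (\<lambda>j. A j \<omega>) (\<lambda>j. B j \<omega>) n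
                   - (1 - pmf (Zlaw (\<lambda>j. A j \<omega>) (\<lambda>j. B j \<omega>) n) 0))
                 / Pi_env (\<lambda>j. A j \<omega>) n)
             \<longlonglongrightarrow> 1 / (R_inf (\<lambda>j. A j \<omega>) (\<lambda>j. B j \<omega>))\<^sup>2"
  proof -
  have A1: "AE \<omega> in M. \<forall>k. k \<ge> 1 \<longrightarrow> A k \<omega> > 0 \<and> B k \<omega> > 0 \<and> A k \<omega> + B k \<omega> \<ge> 1"
    unfolding AE_all_countable
  proof
    fix k :: nat
    show "AE \<omega> in M. k \<ge> 1 \<longrightarrow> A k \<omega> > 0 \<and> B k \<omega> > 0 \<and> A k \<omega> + B k \<omega> \<ge> 1"
    proof (cases "k \<ge> 1")
      case True
      then show ?thesis using supp by (auto elim!: AE_mp intro!: AE_I2)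
    next
      case False
      then show ?thesis by simp
    qed
  qed
  show ?thesis using A1 supercrit
  proof eventually_elim
    case (elim \<omega>)
    show ?case
      by (rule det[of "\<lambda>j. A j \<omega>" "\<lambda>j. B j \<omega>"]) (use elim in auto)
  qed
qed

end
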